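(* Let $K>0$, let $H_1,H_2$ be real Hilbert spaces, let $B=H_1\times H_2$ with the symmetric bilinear form $\lfloor (x_1,x_2),(y_1,y_2)\rfloor=K^2\langle x_1,y_1\rangle_{H_1}-\langle x_2,y_2\rangle_{H_2}$ and $q(b)=\frac12\lfloor b,b\rfloor$. Let $0<K'<K$ and let $f:D\to H_2$ be a $K'$-Lipschitz mapping defined on a nonempty closed set $D\subset H_1$. Then the graph of $f$ is $q$-representable.
   Context: $w(B,B)$ is the coarsest topology on $B$ making all maps $b\mapsto\lfloor b,c\rfloor$ ($c\in B$) continuous (here it coincides with the weak topology of the Hilbert space $H_1\times H_2$). A nonempty $A\subset B$ is $q$-positive if $q(b-c)\ge0$ for all $b,c\in A$. A $q$-positive set $A$ is $q$-representable if there exists a $w(B,B)$-lower semicontinuous proper convex function $\varphi:B\to\mathbb{R}\cup\{+\infty\}$ with $\varphi\ge q$ on $B$ and $\{b:\varphi(b)=q(b)\}=A$. A map $g$ is $L$-Lipschitz if $\|g(x)-g(y)\|_{H_2}\le L\|x-y\|_{H_1}$ on its domain. *)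

theory Defs
  imports "HOL-Analysis.Analysis"
begin

definition bform :: "real \<Rightarrow> ('a::real_inner \<times> 'b::real_inner) \<Rightarrow> ('a \<times> 'b) \<Rightarrow> real" where
  "bform K b c = K\<^sup>2 * inner (fst b) (fst c) - inner (snd b) (snd c)"

definition qform :: "real \<Rightarrow> ('a::real_inner \<times> 'b::real_inner) \<Rightarrow> real" where
  "qform K b = bform K b b / 2"

definition wtop :: "real \<Rightarrow> ('a::real_inner \<times> 'b::real_inner) topology" where
  "wtop K = topology_generated_by {{b. bform K b c \<in> U} | c U. open U}"

definition q_positive :: "real \<Rightarrow> ('a::real_inner \<times> 'b::real_inner) set \<Rightarrow> bool" where
  "q_positive K A \<longleftrightarrow> A \<noteq> {} \<and> (\<forall>b\<in>A. \<forall>c\<in>A. qform K (b - c) \<ge> 0)"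

definition lsc_wrt :: "'x topology \<Rightarrow> ('x \<Rightarrow> ereal) \<Rightarrow> bool" where
  "lsc_wrt T \<phi> \<longleftrightarrow> (\<forall>t::ereal. openin T {x. t < \<phi> x})"

definition proper_convex :: "('a::real_vector \<Rightarrow> ereal) \<Rightarrow> bool" where
  "proper_convex \<phi> \<longleftrightarrow> (\<forall>x. \<phi> x \<noteq> -\<infinity>) \<and> (\<exists>x. \<phi> x \<noteq> \<infinity>) \<and>
     (\<forall>x y u. 0 \<le> u \<and> u \<le> 1 \<longrightarrow>
        \<phi> (u *\<^sub>R x + (1 - u) *\<^sub>R y) \<le> ereal u * \<phi> x + ereal (1 - u) * \<phi> y)"

definition q_representable :: "real \<Rightarrow> ('a::real_inner \<times> 'b::real_inner) set \<Rightarrow> bool" where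
  "q_representable K A \<longleftrightarrow> q_positive K A \<and>
     (\<exists>\<phi>. lsc_wrt (wtop K) \<phi> \<and> proper_convex \<phi> \<and>
          (\<forall>b. ereal (qform K b) \<le> \<phi> b) \<and> {b. \<phi> b = ereal (qform K b)} = A)"

end

theory Submission
  imports Defs
begin

lemma parallelogram_le:
  fixes a b :: "'c::real_inner"
  shows "norm (a - b)^2 = 2*norm a^2 + 2*norm b^2 - 4 * norm ((1/2) *\<^sub>R a + (1/2) *\<^sub>R b)^2"
  by (simp add: power2_norm_eq_inner inner_add_left inner_add_right inner_diff_left inner_diff_right inner_commute algebra_simps)

lemma hilbert_sep0:
  fixes E :: "'c::{real_inner,complete_space} set"
  assumes cE: "convex E" and ne: "E \<noteq> {}" and mu: "\<mu> > 0" and bd: "\<forall>e\<in>E. \<mu> \<le> norm e"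
  shows "\<exists>p. p \<noteq> 0 \<and> (\<forall>e\<in>E. inner p p \<le> inner e p)"
proof -
  define r where "r = Inf (norm ` E)"
  have bdd: "bdd_below (norm ` E)" by (rule bdd_belowI[of _ 0]) auto
  have rle: "r \<le> norm e" if "e \<in> E" for e
    unfolding r_def using bdd that by (auto intro: cInf_lower)
  have rmu: "\<mu> \<le> r" unfolding r_def using ne bd by (auto intro: cInf_greatest)
  have "\<exists>e\<in>E. norm e < r + inverse (real (Suc k))" for k
  proof -
    have "Inf (norm ` E) < r + inverse (real (Suc k))" unfolding r_def by simp
    then obtain v where "v \<in> norm ` E" "v < r + inverse (real (Suc k))"
      using cInf_lessD[of "norm ` E"] ne by blast
    then show ?thesis by auto
  qed
  then obtain s where sE: "\<And>k. s k \<in> E" and sn: "\<And>k. norm (s k) < r + inverse (real (Suc k))"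
    by metis
  have par: "norm (a - b)^2 \<le> 2*norm a^2 + 2*norm b^2 - 4*r^2" if "a \<in> E" "b \<in> E" for a b
  proof -
    have "(1/2) *\<^sub>R a + (1/2) *\<^sub>R b \<in> E" using cE that by (intro convexD) auto
    then have "r \<le> norm ((1/2) *\<^sub>R a + (1/2) *\<^sub>R b)" by (rule rle)
    moreover have "0 \<le> r" using rmu mu by simp
    ultimately have "r^2 \<le> norm ((1/2) *\<^sub>R a + (1/2) *\<^sub>R b)^2" by (simp add: power_mono)
    then show ?thesis using parallelogram_le[of a b] by linarith
  qed
  have r0: "0 \<le> r" using rmu mu by simp
  have "Cauchy s"
  proof (rule CauchyI)
    fix e :: real assume e: "0 < e"
    have "0 < e^2 / (4*(2*r+1))" using e r0 by simp
    then obtain N where N: "inverse (real (Suc N)) < e^2 / (4*(2*r+1))"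
      using reals_Archimedean by blast
    define \<eta> where "\<eta> = inverse (real (Suc N))"
    have eta0: "0 < \<eta>" "\<eta> \<le> 1" unfolding \<eta>_def by (auto simp: field_simps)
    have nb: "norm (s m)^2 \<le> (r + \<eta>)^2" if "m \<ge> N" for m
    proof -
      have "inverse (real (Suc m)) \<le> \<eta>" unfolding \<eta>_def using that
        by (simp add: le_imp_inverse_le)
      then have "norm (s m) \<le> r + \<eta>" using sn[of m] by linarith
      then show ?thesis by (simp add: power_mono)
    qed
    show "\<exists>M. \<forall>m\<ge>M. \<forall>n\<ge>M. norm (s m - s n) < e"
    proof (intro exI allI impI)
      fix m n assume m: "N \<le> m" and n: "N \<le> n"
      have "norm (s m - s n)^2 \<le> 4*(r+\<eta>)^2 - 4* r^2"
        using par[OF sE sE, of m n] nb[OF m] nb[OF n] by linarith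
      also have "\<dots> = 4*((r+\<eta>)^2 - r^2)" by simp
      also have "\<dots> = 4*(2*r*\<eta> + \<eta>^2)" by (simp add: power2_eq_square algebra_simps)
      also have "\<dots> \<le> 4*(2*r+1)*\<eta>"
        using eta0 r0 by (simp add: power2_eq_square algebra_simps mult_left_le)
      also have "\<dots> < e^2" using N eta0 r0 unfolding \<eta>_def by (simp add: field_simps)
      finally have "norm (s m - s n)^2 < e^2" .
      then show "norm (s m - s n) < e" using e by (simp add: power_less_imp_less_base)
    qed
  qed
  then obtain p where sp: "s \<longlonglongrightarrow> p" using Cauchy_convergent_iff convergent_def by blast
  have pr: "norm p \<le> r"
  proof (rule LIMSEQ_le)
    show "(\<lambda>k. norm (s k)) \<longlonglongrightarrow> norm p" using sp by (intro tendsto_intros)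
    show "(\<lambda>k. r + inverse (real (Suc k))) \<longlonglongrightarrow> r"
      using tendsto_add[OF tendsto_const LIMSEQ_inverse_real_of_nat, of r] by simp
    show "\<exists>N. \<forall>n\<ge>N. norm (s n) \<le> r + inverse (real (Suc n))" using sn less_imp_le by blast
  qed
  have seg: "r \<le> norm ((1-t) *\<^sub>R p + t *\<^sub>R e)" if e: "e \<in> E" and t: "0 \<le> t" "t \<le> 1" for e t
  proof (rule LIMSEQ_le_const)
    show "(\<lambda>k. norm ((1-t) *\<^sub>R s k + t *\<^sub>R e)) \<longlonglongrightarrow> norm ((1-t) *\<^sub>R p + t *\<^sub>R e)"
      using sp by (intro tendsto_intros)
    have "(1-t) *\<^sub>R s k + t *\<^sub>R e \<in> E" for k using cE sE e t by (intro convexD) auto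
    then show "\<exists>N. \<forall>n\<ge>N. r \<le> norm ((1-t) *\<^sub>R s n + t *\<^sub>R e)" using rle by blast
  qed
  have "r \<le> norm p" using seg[of "s 0" 0] sE by simp
  then have p0: "p \<noteq> 0" using rmu mu by auto
  have "inner p p \<le> inner e p" if e: "e \<in> E" for e
  proof (rule ccontr)
    assume "\<not> ?thesis"
    then have c: "inner p (e - p) < 0" by (simp add: inner_diff_right inner_commute)
    define c where "c = - inner p (e - p)"
    have c0: "c > 0" using c unfolding c_def by simp
    define t where "t = min 1 (c / (norm (e-p)^2 + 1))"
    have "0 < c / (norm (e-p)^2 + 1)" by (intro divide_pos_pos c0) (simp add: add_nonneg_pos)
    then have t0: "0 < t" "t \<le> 1" unfolding t_def by auto
    have "t * norm (e-p)^2 \<le> c / (norm (e-p)^2 + 1) * norm (e-p)^2"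
      unfolding t_def by (intro mult_right_mono) auto
    also have "\<dots> < c"
    proof -
      have "c * norm (e-p)^2 < c * (norm (e-p)^2 + 1)" using c0 by simp
      moreover have "0 < norm (e-p)^2 + 1" by (simp add: add_nonneg_pos)
      ultimately show ?thesis by (simp add: pos_divide_less_eq algebra_simps)
    qed
    finally have tc: "t * norm (e-p)^2 < c" .
    have "norm p ^2 \<le> norm ((1-t) *\<^sub>R p + t *\<^sub>R e)^2"
      using seg[OF e, of t] t0 pr by (simp add: power_mono)
    also have "(1-t) *\<^sub>R p + t *\<^sub>R e = p + t *\<^sub>R (e - p)" by (simp add: algebra_simps)
    also have "norm (p + t *\<^sub>R (e - p))^2 = norm p^2 + 2*t*inner p (e-p) + t^2 * norm (e-p)^2"
      unfolding power2_norm_eq_inner by (simp add: inner_add_left inner_add_right inner_diff_left inner_diff_right inner_commute algebra_simps power2_eq_square)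
    finally have "0 \<le> t * (2 * inner p (e-p) + t * norm (e-p)^2)"
      by (simp add: algebra_simps power2_eq_square)
    then have "0 \<le> 2 * inner p (e-p) + t * norm (e-p)^2" using t0 by (simp add: zero_le_mult_iff)
    then show False using tc c_def c0 by linarith
  qed
  then show ?thesis using p0 by blast
qed


lemma wvar:
  fixes v :: "'i \<Rightarrow> 'c::real_inner"
  assumes "finite F" "sum u F = 1"
  shows "(\<Sum>s\<in>F. u s * norm (v s - c)^2) =
     ((\<Sum>s\<in>F. u s * norm (v s)^2) - norm (\<Sum>s\<in>F. u s *\<^sub>R v s)^2) + norm ((\<Sum>s\<in>F. u s *\<^sub>R v s) - c)^2"
proof -
  define M where "M = (\<Sum>s\<in>F. u s *\<^sub>R v s)"
  have e: "norm (v s - c)^2 = norm (v s)^2 - 2 * inner (v s) c + norm c^2" for s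
    unfolding power2_norm_eq_inner by (simp add: inner_diff_left inner_diff_right inner_commute)
  have "(\<Sum>s\<in>F. u s * norm (v s - c)^2) = (\<Sum>s\<in>F. u s * norm (v s)^2) - 2 * (\<Sum>s\<in>F. u s * inner (v s) c) + (\<Sum>s\<in>F. u s) * norm c^2"
    unfolding e by (simp add: algebra_simps sum.distrib sum_subtractf sum_distrib_left sum_distrib_right)
  also have "(\<Sum>s\<in>F. u s * inner (v s) c) = inner M c"
    unfolding M_def by (simp add: inner_sum_left)
  also have "norm (M - c)^2 = norm M^2 - 2 * inner M c + norm c^2"
    unfolding power2_norm_eq_inner by (simp add: inner_diff_left inner_diff_right inner_commute)
  ultimately show ?thesis using assms unfolding M_def by simp
qed

lemma wvar_pair:
  fixes v :: "'i \<Rightarrow> 'c::real_inner"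
  assumes "finite F" "sum u F = 1"
  shows "(\<Sum>s'\<in>F. \<Sum>s\<in>F. u s' * u s * norm (v s - v s')^2) =
     2 * ((\<Sum>s\<in>F. u s * norm (v s)^2) - norm (\<Sum>s\<in>F. u s *\<^sub>R v s)^2)"
proof -
  define M where "M = (\<Sum>s\<in>F. u s *\<^sub>R v s)"
  define V where "V = (\<Sum>s\<in>F. u s * norm (v s)^2) - norm M^2"
  have "(\<Sum>s'\<in>F. \<Sum>s\<in>F. u s' * u s * norm (v s - v s')^2) = (\<Sum>s'\<in>F. u s' * (\<Sum>s\<in>F. u s * norm (v s - v s')^2))"
    by (simp add: sum_distrib_left mult.assoc)
  also have "\<dots> = (\<Sum>s'\<in>F. u s' * (V + norm (M - v s')^2))"
    using wvar[OF assms, of v] unfolding M_def V_def by simp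
  also have "\<dots> = V * (\<Sum>s'\<in>F. u s') + (\<Sum>s'\<in>F. u s' * norm (v s' - M)^2)"
    by (simp add: algebra_simps sum.distrib sum_distrib_left sum_distrib_right norm_minus_commute)
  also have "(\<Sum>s'\<in>F. u s' * norm (v s' - M)^2) = V"
    using wvar[OF assms, of v M] unfolding M_def V_def by simp
  finally show ?thesis using assms unfolding V_def M_def by simp
qed


lemma qform_eq: "qform K b = (K^2 * norm (fst b)^2 - norm (snd b)^2) / 2"
  unfolding qform_def bform_def power2_norm_eq_inner by simp

lemma aux_lin: "(L::real) = X/2 \<Longrightarrow> X \<le> Y - Q \<Longrightarrow> Y/2 \<le> t \<Longrightarrow> qq = Q/2 \<Longrightarrow> L \<le> t - qq"
  by linarith

lemma hull_ineq:
  fixes f :: "'a::real_inner \<Rightarrow> 'b::real_inner"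
  assumes K: "0 < K" "K' < K" and lip: "K'-lipschitz_on D f"
  and e: "e \<in> convex hull {(a,t). a \<in> {(x, f x) | x. x\<in>D} \<and> qform K a \<le> t}"
  shows "(x \<notin> D \<longrightarrow> (infdist x D)^2 \<le> (snd e - qform K (fst e)) / ((K^2 - K'^2)/2) + norm (fst (fst e) - x)^2)
       \<and> (x \<in> D \<longrightarrow> norm (snd (fst e) - f x)^2 \<le> K'^2 * ((snd e - qform K (fst e)) / ((K^2 - K'^2)/2) + norm (fst (fst e) - x)^2))"
proof -
  have K'0: "0 \<le> K'" using lip lipschitz_on_nonneg by blast
  have KK: "K'^2 < K^2" using K K'0 by (simp add: power_strict_mono)
  define \<kappa> where "\<kappa> = (K^2 - K'^2)/2"
  have k0: "\<kappa> > 0" using KK unfolding \<kappa>_def by simp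
  obtain F u where F: "finite F" "F \<subseteq> {(a,t). a \<in> {(x, f x) | x. x\<in>D} \<and> qform K a \<le> t}"
    and u0: "\<forall>s\<in>F. 0 \<le> u s" and u1: "sum u F = 1" and eF: "(\<Sum>s\<in>F. u s *\<^sub>R s) = e"
    using e unfolding convex_hull_explicit by blast
  define Z where "Z s = fst (fst s)" for s :: "('a \<times> 'b) \<times> real"
  define W where "W s = snd (fst s)" for s :: "('a \<times> 'b) \<times> real"
  define T where "T s = snd s" for s :: "('a \<times> 'b) \<times> real"
  have ZD: "Z s \<in> D" and WZ: "W s = f (Z s)" and qT: "(K^2 * norm (Z s)^2 - norm (W s)^2)/2 \<le> T s"
    if "s \<in> F" for s
    using F(2) that unfolding Z_def W_def T_def qform_eq by auto
  define m1 where "m1 = fst (fst e)"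
  define m2 where "m2 = snd (fst e)"
  define t where "t = snd e"
  have m1: "m1 = (\<Sum>s\<in>F. u s *\<^sub>R Z s)" unfolding m1_def Z_def eF[symmetric] by (simp add: fst_sum)
  have m2: "m2 = (\<Sum>s\<in>F. u s *\<^sub>R W s)" unfolding m2_def W_def eF[symmetric] by (simp add: fst_sum snd_sum)
  have tt: "t = (\<Sum>s\<in>F. u s * T s)" unfolding t_def T_def eF[symmetric] by (simp add: snd_sum)
  define SZ where "SZ = (\<Sum>s\<in>F. u s * norm (Z s)^2)"
  define SW where "SW = (\<Sum>s\<in>F. u s * norm (W s)^2)"
  define Vz where "Vz = SZ - norm m1^2"
  define Vf where "Vf = SW - norm m2^2"
  have "(\<Sum>s\<in>F. u s * ((K^2 * norm (Z s)^2 - norm (W s)^2)/2)) \<le> t"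
    unfolding tt using u0 qT by (intro sum_mono mult_left_mono) auto
  moreover have "(\<Sum>s\<in>F. u s * ((K^2 * norm (Z s)^2 - norm (W s)^2)/2)) = (K^2 * SZ - SW)/2"
  proof -
    have "(\<Sum>s\<in>F. u s * ((K^2 * norm (Z s)^2 - norm (W s)^2)/2)) = (\<Sum>s\<in>F. (K^2 * (u s * norm (Z s)^2) - u s * norm (W s)^2)/2)"
      by (rule sum.cong) (simp_all add: algebra_simps)
    also have "\<dots> = (K^2 * SZ - SW)/2"
      unfolding SZ_def SW_def by (simp add: sum_divide_distrib[symmetric] sum_subtractf sum_distrib_left)
    finally show ?thesis .
  qed
  ultimately have t1: "(K^2 * SZ - SW)/2 \<le> t" by simp
  have qm: "qform K (fst e) = (K^2 * norm m1^2 - norm m2^2)/2" unfolding qform_eq m1_def m2_def by simp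
  have pz: "(\<Sum>s'\<in>F. \<Sum>s\<in>F. u s' * u s * norm (Z s - Z s')^2) = 2 * Vz"
    using wvar_pair[OF F(1) u1, of Z] unfolding Vz_def SZ_def m1 by simp
  have pw: "(\<Sum>s'\<in>F. \<Sum>s\<in>F. u s' * u s * norm (W s - W s')^2) = 2 * Vf"
    using wvar_pair[OF F(1) u1, of W] unfolding Vf_def SW_def m2 by simp
  have lipW: "norm (W s - f c)^2 \<le> K'^2 * norm (Z s - c)^2" if "s \<in> F" "c \<in> D" for s c
  proof -
    have "dist (f (Z s)) (f c) \<le> K' * dist (Z s) c" using lip ZD[OF that(1)] that(2) by (rule lipschitz_onD)
    then have "norm (W s - f c) \<le> K' * norm (Z s - c)" using WZ[OF that(1)] by (simp add: dist_norm)
    then have "norm (W s - f c)^2 \<le> (K' * norm (Z s - c))^2" by (simp add: power_mono)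
    then show ?thesis by (simp add: power_mult_distrib)
  qed
  have "2 * Vf \<le> (\<Sum>s'\<in>F. \<Sum>s\<in>F. u s' * u s * (K'^2 * norm (Z s - Z s')^2))"
    unfolding pw[symmetric]
  proof (intro sum_mono mult_left_mono)
    fix s s' assume "s' \<in> F" "s \<in> F"
    then show "norm (W s - W s')^2 \<le> K'^2 * norm (Z s - Z s')^2" using lipW[of s "Z s'"] WZ ZD by auto
    show "0 \<le> u s' * u s" using u0 \<open>s' \<in> F\<close> \<open>s \<in> F\<close> by simp
  qed
  also have "\<dots> = K'^2 * (2 * Vz)" unfolding pz[symmetric]
    by (simp add: sum_distrib_left algebra_simps)
  finally have VfVz: "Vf \<le> K'^2 * Vz" by simp
  have "Vz * (K^2 - K'^2) \<le> K^2 * Vz - Vf" using VfVz by (simp add: algebra_simps)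
  also have "\<dots> = (K^2 * SZ - SW) - (K^2 * norm m1^2 - norm m2^2)"
    unfolding Vz_def Vf_def by (simp add: algebra_simps)
  finally have A: "Vz * (K^2 - K'^2) \<le> (K^2 * SZ - SW) - (K^2 * norm m1^2 - norm m2^2)" .
  have "\<kappa> * Vz = (Vz * (K^2 - K'^2)) / 2" unfolding \<kappa>_def by simp
  then have "\<kappa> * Vz \<le> t - qform K (fst e)" using A t1 qm
    by (rule aux_lin)
  then have Vzb: "Vz \<le> (t - qform K (fst e)) / \<kappa>" using k0 by (simp add: pos_le_divide_eq mult.commute)
  have wz: "(\<Sum>s\<in>F. u s * norm (Z s - c)^2) = Vz + norm (m1 - c)^2" for c
    using wvar[OF F(1) u1, of Z c] unfolding Vz_def SZ_def m1 by simp
  have ww: "(\<Sum>s\<in>F. u s * norm (W s - c)^2) = Vf + norm (m2 - c)^2" for c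
    using wvar[OF F(1) u1, of W c] unfolding Vf_def SW_def m2 by simp
  have Vf0: "0 \<le> Vf"
  proof -
    have "0 \<le> (\<Sum>s\<in>F. u s * norm (W s - m2)^2)" using u0 by (intro sum_nonneg) auto
    then show ?thesis using ww[of m2] by simp
  qed
  have c1: "(infdist x D)^2 \<le> (t - qform K (fst e)) / \<kappa> + norm (m1 - x)^2" if x: "x \<notin> D"
  proof -
    have "(\<Sum>s\<in>F. u s * (infdist x D)^2) \<le> (\<Sum>s\<in>F. u s * norm (Z s - x)^2)"
    proof (intro sum_mono mult_left_mono)
      fix s assume s: "s \<in> F"
      have "infdist x D \<le> dist x (Z s)" using ZD[OF s] by (rule infdist_le)
      then have "infdist x D \<le> norm (Z s - x)" by (simp add: dist_norm norm_minus_commute)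
      then show "(infdist x D)^2 \<le> norm (Z s - x)^2" by (simp add: power_mono infdist_nonneg)
      show "0 \<le> u s" using u0 s by simp
    qed
    then have "(infdist x D)^2 \<le> Vz + norm (m1 - x)^2" using wz[of x] u1 by (simp add: sum_distrib_right[symmetric])
    then show ?thesis using Vzb by simp
  qed
  have c2: "norm (m2 - f x)^2 \<le> K'^2 * ((t - qform K (fst e)) / \<kappa> + norm (m1 - x)^2)" if x: "x \<in> D"
  proof -
    have "norm (m2 - f x)^2 \<le> (\<Sum>s\<in>F. u s * norm (W s - f x)^2)" using ww[of "f x"] Vf0 by simp
    also have "\<dots> \<le> (\<Sum>s\<in>F. u s * (K'^2 * norm (Z s - x)^2))"
      using lipW[OF _ x] u0 by (intro sum_mono mult_left_mono) auto
    also have "\<dots> = K'^2 * (\<Sum>s\<in>F. u s * norm (Z s - x)^2)"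
      by (simp add: sum_distrib_left algebra_simps)
    also have "\<dots> = K'^2 * (Vz + norm (m1 - x)^2)" using wz[of x] by simp
    also have "\<dots> \<le> K'^2 * ((t - qform K (fst e)) / \<kappa> + norm (m1 - x)^2)"
      using Vzb by (intro mult_left_mono) auto
    finally show ?thesis .
  qed
  show ?thesis using c1 c2 unfolding m1_def m2_def t_def \<kappa>_def by blast
qed


lemma bform_lin2: "bform K b (\<alpha> *\<^sub>R c1 + \<beta> *\<^sub>R c2) = \<alpha> * bform K b c1 + \<beta> * bform K b c2"
  unfolding bform_def by (simp add: inner_add_right algebra_simps)

lemma bform_lin1: "bform K (\<alpha> *\<^sub>R b1 + \<beta> *\<^sub>R b2) c = \<alpha> * bform K b1 c + \<beta> * bform K b2 c"
  unfolding bform_def by (simp add: inner_add_left algebra_simps)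

lemma bform_inner: "K \<noteq> 0 \<Longrightarrow> bform K b ((1/K^2) *\<^sub>R fst w, - snd w) = inner b w"
  unfolding bform_def inner_prod_def by simp

lemma qform_diff: "qform K (a - c) = qform K a - bform K a c + qform K c"
  unfolding qform_def bform_def by (simp add: inner_diff_left inner_diff_right inner_commute field_simps)

lemma graph_qpos:
  assumes K: "K' < K" and lip: "K'-lipschitz_on D f" and x: "x \<in> D" and z: "z \<in> D"
  shows "0 \<le> qform K ((x, f x) - (z, f z))"
proof -
  have K'0: "0 \<le> K'" using lip lipschitz_on_nonneg by blast
  have "dist (f x) (f z) \<le> K' * dist x z" using lip x z by (rule lipschitz_onD)
  then have "norm (f x - f z) \<le> K' * norm (x - z)" by (simp add: dist_norm)
  then have "norm (f x - f z)^2 \<le> (K' * norm (x - z))^2" by (simp add: power_mono)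
  also have "\<dots> \<le> (K * norm (x - z))^2" using K K'0 by (intro power_mono mult_right_mono) auto
  finally show ?thesis unfolding qform_eq by (simp add: power_mult_distrib)
qed

lemma sep_from_G:
  fixes S :: "'c::real_normed_vector set" and G :: "'c \<Rightarrow> real"
  assumes cont: "continuous (at P0) G" and neg: "G P0 < 0" and pos: "\<forall>e\<in>S. 0 \<le> G e"
  shows "\<exists>\<mu>>0. \<forall>e\<in>S. \<mu> \<le> norm (e - P0)"
proof -
  obtain d where d: "d > 0" "\<forall>x'. dist x' P0 < d \<longrightarrow> dist (G x') (G P0) < - G P0"
    using cont neg unfolding continuous_at_eps_delta by (metis neg_0_less_iff_less)
  have "d \<le> norm (e - P0)" if "e \<in> S" for e
  proof (rule ccontr)
    assume "\<not> ?thesis"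
    then have "dist e P0 < d" by (simp add: dist_norm)
    then have "dist (G e) (G P0) < - G P0" using d by blast
    then have "G e < 0" by (simp add: dist_real_def abs_less_iff)
    then show False using pos that by force
  qed
  then show ?thesis using d by blast
qed

lemma cert_exists:
  fixes f :: "'a::{real_inner,complete_space} \<Rightarrow> 'b::{real_inner,complete_space}"
  assumes K: "0 < K" "K' < K" and D: "D \<noteq> {}" "closed D" and lip: "K'-lipschitz_on D f"
  and b0: "b0 \<notin> {(x, f x) | x. x \<in> D}"
  shows "\<exists>c e. (\<forall>a\<in>{(x, f x) | x. x \<in> D}. bform K a c + e \<le> qform K a) \<and> qform K b0 < bform K b0 c + e"
proof -
  define A where "A = {(x, f x) | x. x \<in> D}"
  obtain x y where b0eq: "b0 = (x, y)" by fastforce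
  define S where "S = {(a,t). a \<in> A \<and> qform K a \<le> t}"
  define P0 where "P0 = (b0, qform K b0)"
  define \<kappa> where "\<kappa> = (K^2 - K'^2)/2"
  have K'0: "0 \<le> K'" using lip lipschitz_on_nonneg by blast
  have KK: "K'^2 < K^2" using K K'0 by (simp add: power_strict_mono)
  have k0: "\<kappa> \<noteq> 0" using KK unfolding \<kappa>_def by simp
  have hi: "(x \<notin> D \<longrightarrow> (infdist x D)^2 \<le> (snd e - qform K (fst e)) / \<kappa> + norm (fst (fst e) - x)^2)
       \<and> (x \<in> D \<longrightarrow> norm (snd (fst e) - f x)^2 \<le> K'^2 * ((snd e - qform K (fst e)) / \<kappa> + norm (fst (fst e) - x)^2))"
    if "e \<in> convex hull S" for e
    using hull_ineq[OF K lip, of e x] that unfolding S_def A_def \<kappa>_def by blast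
  have "\<exists>\<mu>>0. \<forall>e\<in>convex hull S. \<mu> \<le> norm (e - P0)"
  proof (cases "x \<in> D")
    case True
    then have yne: "y \<noteq> f x" using b0 b0eq by auto
    show ?thesis
    proof (rule sep_from_G)
      show "continuous (at P0) (\<lambda>e. K'^2 * ((snd e - qform K (fst e)) / \<kappa> + norm (fst (fst e) - x)^2) - norm (snd (fst e) - f x)^2)"
        unfolding qform_eq by (intro continuous_intros) (auto simp: k0)
      show "(\<lambda>e. K'^2 * ((snd e - qform K (fst e)) / \<kappa> + norm (fst (fst e) - x)^2) - norm (snd (fst e) - f x)^2) P0 < 0"
        using yne unfolding P0_def b0eq by simp
      show "\<forall>e\<in>convex hull S. 0 \<le> (\<lambda>e. K'^2 * ((snd e - qform K (fst e)) / \<kappa> + norm (fst (fst e) - x)^2) - norm (snd (fst e) - f x)^2) e"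
        using hi True by simp
    qed
  next
    case False
    have "infdist x D > 0" using D False by (intro infdist_pos_not_in_closed) auto
    show ?thesis
    proof (rule sep_from_G)
      show "continuous (at P0) (\<lambda>e. (snd e - qform K (fst e)) / \<kappa> + norm (fst (fst e) - x)^2 - (infdist x D)^2)"
        unfolding qform_eq by (intro continuous_intros) (auto simp: k0)
      show "(\<lambda>e. (snd e - qform K (fst e)) / \<kappa> + norm (fst (fst e) - x)^2 - (infdist x D)^2) P0 < 0"
        using \<open>infdist x D > 0\<close> unfolding P0_def b0eq by simp
      show "\<forall>e\<in>convex hull S. 0 \<le> (\<lambda>e. (snd e - qform K (fst e)) / \<kappa> + norm (fst (fst e) - x)^2 - (infdist x D)^2) e"
        using hi False by simp
    qed
  qed
  then obtain \<mu> where mu: "\<mu> > 0" "\<forall>e\<in>convex hull S. \<mu> \<le> norm (e - P0)" by blast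
  obtain z0 where z0: "z0 \<in> D" using D by blast
  define a0 where "a0 = (z0, f z0)"
  have a0A: "a0 \<in> A" unfolding a0_def A_def using z0 by blast
  have a0S: "(a0, qform K a0) \<in> S" unfolding S_def using a0A by simp
  have "\<exists>p. p \<noteq> 0 \<and> (\<forall>e\<in>(+) (- P0) ` (convex hull S). inner p p \<le> inner e p)"
  proof (rule hilbert_sep0)
    show "convex ((+) (- P0) ` (convex hull S))" by (intro convex_translation convex_convex_hull)
    show "(+) (- P0) ` (convex hull S) \<noteq> {}" using a0S hull_subset[of S convex] by blast
    show "\<forall>e\<in>(+) (- P0) ` (convex hull S). \<mu> \<le> norm e" using mu(2) by auto
  qed (rule mu(1))
  then obtain n where n0: "n \<noteq> 0" and nsep: "\<forall>e\<in>convex hull S. inner n n \<le> inner (e - P0) n" by auto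
  define \<nu> where "\<nu> = inner n n"
  have nu0: "\<nu> > 0" using n0 unfolding \<nu>_def by simp
  define nb where "nb = fst n"
  define nt where "nt = snd n"
  have key: "\<nu> \<le> inner (a - b0) nb + (t - qform K b0) * nt" if "a \<in> A" "qform K a \<le> t" for a t
  proof -
    have "(a, t) \<in> convex hull S" using that hull_subset[of S convex] unfolding S_def by blast
    then have "\<nu> \<le> inner ((a,t) - P0) n" using nsep unfolding \<nu>_def by blast
    then show ?thesis unfolding P0_def nb_def nt_def inner_prod_def by simp
  qed
  have nt0: "0 \<le> nt"
  proof (rule ccontr)
    assume "\<not> 0 \<le> nt"
    then have ntn: "nt < 0" by simp
    define C where "C = inner (a0 - b0) nb + (qform K a0 - qform K b0) * nt"
    define s where "s = (\<bar>C\<bar> + \<nu>) / (- nt)"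
    have s0: "0 \<le> s" unfolding s_def using ntn nu0 by (intro divide_nonneg_pos) auto
    have snt: "s * nt = - (\<bar>C\<bar> + \<nu>)" unfolding s_def using ntn by (simp add: field_simps)
    have "\<nu> \<le> inner (a0 - b0) nb + (qform K a0 + s - qform K b0) * nt"
      using key[OF a0A, of "qform K a0 + s"] s0 by simp
    also have "\<dots> = C + s * nt" unfolding C_def by (simp add: algebra_simps)
    finally show False using snt nu0 by linarith
  qed
  define lz where "lz b = bform K b a0 - qform K a0" for b
  have l0A: "lz a \<le> qform K a" if aA: "a \<in> A" for a
  proof -
    obtain z where z: "z \<in> D" "a = (z, f z)" using aA unfolding A_def by blast
    have "0 \<le> qform K (a - a0)" unfolding z(2) a0_def using graph_qpos[OF K(2) lip z(1) z0] .
    then show ?thesis unfolding qform_diff lz_def by simp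
  qed
  define lam where "lam = (\<bar>qform K b0 - lz b0\<bar> + 1) / \<nu>"
  have la0: "0 \<le> lam" unfolding lam_def using nu0 by simp
  have lanu: "lam * \<nu> = \<bar>qform K b0 - lz b0\<bar> + 1" unfolding lam_def using nu0 by simp
  define Dn where "Dn = 1 + lam * nt"
  have Dn0: "0 < Dn" unfolding Dn_def using la0 nt0 by (simp add: add_pos_nonneg)
  define ll where "ll b = (lz b + lam * (\<nu> - inner (b - b0) nb + nt * qform K b0)) / Dn" for b
  define cn where "cn = ((1/K^2) *\<^sub>R fst nb, - snd nb)"
  define c where "c = (1/Dn) *\<^sub>R a0 + (- lam / Dn) *\<^sub>R cn"
  define e where "e = (- qform K a0 + lam * \<nu> + lam * inner b0 nb + lam * nt * qform K b0) / Dn"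
  have lform: "bform K b c + e = ll b" for b
  proof -
    have "bform K b c = (1/Dn) * bform K b a0 + (- lam / Dn) * inner b nb"
      unfolding c_def bform_lin2 cn_def using bform_inner[of K b nb] K by simp
    moreover have "Dn \<noteq> 0" using Dn0 by simp
    ultimately show ?thesis unfolding ll_def e_def lz_def
      by (simp add: inner_diff_left field_simps)
  qed
  have "ll a \<le> qform K a" if a: "a \<in> A" for a
  proof -
    have "\<nu> - inner (a - b0) nb + nt * qform K b0 \<le> nt * qform K a"
      using key[OF a order_refl] by (simp add: algebra_simps)
    then have "lam * (\<nu> - inner (a - b0) nb + nt * qform K b0) \<le> lam * (nt * qform K a)"
      using la0 by (rule mult_left_mono)
    then have "lz a + lam * (\<nu> - inner (a - b0) nb + nt * qform K b0) \<le> Dn * qform K a"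
      using l0A[OF a] unfolding Dn_def by (simp add: algebra_simps)
    then show ?thesis unfolding ll_def using Dn0 by (simp add: pos_divide_le_eq mult.commute)
  qed
  moreover have "qform K b0 < ll b0"
  proof -
    have "Dn * qform K b0 < lz b0 + lam * (\<nu> - inner (b0 - b0) nb + nt * qform K b0)"
      using lanu unfolding Dn_def by (simp add: algebra_simps)
    then show ?thesis unfolding ll_def using Dn0 by (simp add: pos_less_divide_eq mult.commute)
  qed
  ultimately show ?thesis unfolding A_def[symmetric] using lform by metis
qed


lemma open_ereal_gt: "open {s::real. t < ereal (s + e)}"
proof (cases t)
  case (real r)
  then have "{s::real. t < ereal (s + e)} = {r - e <..}" by auto
  then show ?thesis by simp
next
  case PInf then show ?thesis by simp
next
  case MInf then show ?thesis by simp
qed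

lemma lsc_sup_affine:
  "lsc_wrt (wtop K) (\<lambda>b. SUP ce\<in>C. ereal (bform K b (fst ce) + snd ce))"
  unfolding lsc_wrt_def
proof
  fix t :: ereal
  have eq: "{b. t < (SUP ce\<in>C. ereal (bform K b (fst ce) + snd ce))} =
    \<Union>((\<lambda>ce. {b. bform K b (fst ce) \<in> {s. t < ereal (s + snd ce)}}) ` C)"
    by (auto simp: less_SUP_iff)
  show "openin (wtop K) {b. t < (SUP ce\<in>C. ereal (bform K b (fst ce) + snd ce))}"
    unfolding eq wtop_def
  proof (rule openin_Union)
    fix S assume "S \<in> (\<lambda>ce. {b. bform K b (fst ce) \<in> {s. t < ereal (s + snd ce)}}) ` C"
    then obtain ce where S: "S = {b. bform K b (fst ce) \<in> {s. t < ereal (s + snd ce)}}" by blast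
    show "openin (topology_generated_by {{b. bform K b c \<in> U} | c U. open U}) S"
      unfolding S by (rule topology_generated_by_Basis) (use open_ereal_gt in blast)
  qed
qed

theorem mainTheorem18:
  fixes K K' :: real
    and f :: "'a::{real_inner,complete_space} \<Rightarrow> 'b::{real_inner,complete_space}"
    and D :: "'a set"
  assumes "0 < K" and "0 < K'" and "K' < K"
    and "D \<noteq> {}" and "closed D"
    and "K'-lipschitz_on D f"
  shows "q_representable K {(x, f x) | x. x \<in> D}"
proof -
  note K = assms(1,3) and D = assms(4,5) and lip = assms(6)
  define A where "A = {(x, f x) | x. x \<in> D}"
  define C where "C = {(c,e). \<forall>a\<in>A. bform K a c + e \<le> qform K a}"
  define \<phi> where "\<phi> b = (SUP ce\<in>C. ereal (bform K b (fst ce) + snd ce))" for b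
  have qpos: "0 \<le> qform K (a - a')" if "a \<in> A" "a' \<in> A" for a a'
    using that graph_qpos[OF K(2) lip] unfolding A_def by blast
  have AC: "(a, - qform K a) \<in> C" if a: "a \<in> A" for a
  proof -
    have "bform K a' a + - qform K a \<le> qform K a'" if a': "a' \<in> A" for a'
    proof -
      have "0 \<le> qform K (a' - a)" using qpos[OF a' a] .
      then show ?thesis unfolding qform_diff by linarith
    qed
    then show ?thesis unfolding C_def by simp
  qed
  have bb: "bform K a a = 2 * qform K a" for a unfolding qform_def by simp
  have phiA: "\<phi> a = ereal (qform K a)" if a: "a \<in> A" for a
  proof (rule antisym)
    show "\<phi> a \<le> ereal (qform K a)" unfolding \<phi>_def
      by (rule SUP_least) (use a in \<open>auto simp: C_def\<close>)
    have "ereal (bform K a (fst (a, - qform K a)) + snd (a, - qform K a)) \<le> \<phi> a"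
      unfolding \<phi>_def using AC[OF a] by (rule SUP_upper)
    then show "ereal (qform K a) \<le> \<phi> a" using bb[of a] by simp
  qed
  have phinA: "ereal (qform K b) < \<phi> b" if b: "b \<notin> A" for b
  proof -
    obtain c e where ce: "\<forall>a\<in>A. bform K a c + e \<le> qform K a" "qform K b < bform K b c + e"
      using cert_exists[OF K D lip, of b] b unfolding A_def by blast
    have "(c, e) \<in> C" using ce(1) unfolding C_def by simp
    then have "ereal (bform K b (fst (c,e)) + snd (c,e)) \<le> \<phi> b" unfolding \<phi>_def by (rule SUP_upper)
    moreover have "ereal (qform K b) < ereal (bform K b c + e)" using ce(2) by simp
    ultimately show ?thesis by (metis fst_conv snd_conv less_le_trans)
  qed
  obtain z0 where z0: "z0 \<in> D" using D by blast
  have a0: "(z0, f z0) \<in> A" unfolding A_def using z0 by blast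
  have Cne: "C \<noteq> {}" using AC[OF a0] by blast
  have "proper_convex \<phi>"
    unfolding proper_convex_def
  proof (intro conjI allI impI)
    fix x
    obtain ce where "ce \<in> C" using Cne by blast
    then have "ereal (bform K x (fst ce) + snd ce) \<le> \<phi> x" unfolding \<phi>_def by (rule SUP_upper)
    then show "\<phi> x \<noteq> -\<infinity>" by auto
  next
    show "\<exists>x. \<phi> x \<noteq> \<infinity>"
    proof
      show "\<phi> (z0, f z0) \<noteq> \<infinity>" using phiA[OF a0] by simp
    qed
  next
    fix x y and u :: real assume u: "0 \<le> u \<and> u \<le> 1"
    show "\<phi> (u *\<^sub>R x + (1 - u) *\<^sub>R y) \<le> ereal u * \<phi> x + ereal (1 - u) * \<phi> y"
      unfolding \<phi>_def[of "u *\<^sub>R x + (1 - u) *\<^sub>R y"]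
    proof (rule SUP_least)
      fix ce assume ce: "ce \<in> C"
      have "ereal (bform K (u *\<^sub>R x + (1 - u) *\<^sub>R y) (fst ce) + snd ce)
          = ereal u * ereal (bform K x (fst ce) + snd ce) + ereal (1 - u) * ereal (bform K y (fst ce) + snd ce)"
        by (simp only: bform_lin1) (simp add: algebra_simps)
      also have "\<dots> \<le> ereal u * \<phi> x + ereal (1 - u) * \<phi> y"
        unfolding \<phi>_def using u ce
        by (intro add_mono ereal_mult_left_mono SUP_upper) auto
      finally show "ereal (bform K (u *\<^sub>R x + (1 - u) *\<^sub>R y) (fst ce) + snd ce) \<le> ereal u * \<phi> x + ereal (1 - u) * \<phi> y" .
    qed
  qed
  moreover have "lsc_wrt (wtop K) \<phi>" unfolding \<phi>_def by (rule lsc_sup_affine)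
  moreover have "\<forall>b. ereal (qform K b) \<le> \<phi> b"
    using phiA phinA by (metis order.order_iff_strict)
  moreover have "{b. \<phi> b = ereal (qform K b)} = A"
    using phiA phinA by force
  moreover have "q_positive K A"
    unfolding q_positive_def using a0 qpos by blast
  ultimately show ?thesis unfolding q_representable_def A_def by blast
qed

end
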